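(* Let $p$ be a prime and let $A$, $B$ be $p$-groups with $|A|=p^a$, $|B|=p^b$, $a,b\geq 1$. Let $p^d$ be the maximum order of an element of $A$. For an integer $m\ge 1$ let $s_m$ be the number of elements $g\in A$ with $g^m=1$, and for a divisor $n$ of $|B|$ let $d_n$ be the number of elements of $B$ of order $n$. For $0\le n\le b$ put $k_n=\frac{p^{-n}d_{p^{b-n}}}{a(B)}$. Then $$a(A\wr B)=p^d a(B)-(p-1)a(B)\sum_{n=0}^{b}k_n\left[\sum_{m=0}^{d-1}p^m\left(\frac{s_{p^m}}{p^a}\right)^{p^n}\right].$$ Moreover, $k_n\ge 0$ for all $n$ and $\sum_{n=0}^{b}k_n=1$.
   Context: For a finite group $G$, the average order is $a(G)=\frac{1}{|G|}\sum_{g\in G}\mathrm{order}(g)$. For groups $A,B$, let $K=\prod_{b\in B}A$, on which $B$ acts by $x\cdot(\alpha_b)_b=(\alpha_{x^{-1}b})_b$ for $x\in B$; the wreath product $A\wr B$ is the semidirect product $K\rtimes B$ for this action. *)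

theory Defs
  imports "HOL-Algebra.Algebra"
begin

definition avg_order :: "('a, 'c) monoid_scheme \<Rightarrow> real" where
  "avg_order G = (\<Sum>g\<in>carrier G. real (group.ord G g)) / real (order G)"

text \<open>Wreath product A wr B = K \<rtimes> B with K = functions carrier B \<rightarrow> carrier A,
  B acting by (x . f)(b) = f (x^-1 b); multiplication (f,x)(g,y) = (f * (x . g), x y).\<close>
definition wreath :: "('a, 'c) monoid_scheme \<Rightarrow> ('b, 'd) monoid_scheme \<Rightarrow> (('b \<Rightarrow> 'a) \<times> 'b) monoid" where
  "wreath A B = \<lparr> carrier = (carrier B \<rightarrow>\<^sub>E carrier A) \<times> carrier B,
     monoid.mult = (\<lambda>(f, x) (g, y). ((\<lambda>b\<in>carrier B. f b \<otimes>\<^bsub>A\<^esub> g (inv\<^bsub>B\<^esub> x \<otimes>\<^bsub>B\<^esub> b)), x \<otimes>\<^bsub>B\<^esub> y)),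
     one = ((\<lambda>b\<in>carrier B. \<one>\<^bsub>A\<^esub>), \<one>\<^bsub>B\<^esub>) \<rparr>"

definition pow_one_count :: "('a, 'c) monoid_scheme \<Rightarrow> nat \<Rightarrow> nat" where
  "pow_one_count A m = card {g \<in> carrier A. g [^]\<^bsub>A\<^esub> m = \<one>\<^bsub>A\<^esub>}"

definition order_count :: "('a, 'c) monoid_scheme \<Rightarrow> nat \<Rightarrow> nat" where
  "order_count B n = card {g \<in> carrier B. group.ord B g = n}"

end

theory Submission
  imports Defs "HOL-Computational_Algebra.Primes"
begin

lemma wreath_carrier: "carrier (wreath A B) = (carrier B \<rightarrow>\<^sub>E carrier A) \<times> carrier B"
  by (simp add: wreath_def)

lemma wreath_mult: "(f, x) \<otimes>\<^bsub>wreath A B\<^esub> (g, y) =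
   ((\<lambda>b\<in>carrier B. f b \<otimes>\<^bsub>A\<^esub> g (inv\<^bsub>B\<^esub> x \<otimes>\<^bsub>B\<^esub> b)), x \<otimes>\<^bsub>B\<^esub> y)"
  by (simp add: wreath_def)

lemma wreath_one: "\<one>\<^bsub>wreath A B\<^esub> = ((\<lambda>b\<in>carrier B. \<one>\<^bsub>A\<^esub>), \<one>\<^bsub>B\<^esub>)"
  by (simp add: wreath_def)

lemma wreath_group:
  assumes gA: "group A" and gB: "group B"
  shows "group (wreath A B)"
proof -
  interpret A: group A by fact
  interpret B: group B by fact
  show ?thesis
  proof (rule groupI)
    fix u v assume u: "u \<in> carrier (wreath A B)" and v: "v \<in> carrier (wreath A B)"
    obtain f x where [simp]: "u = (f, x)" by (cases u)
    obtain g y where [simp]: "v = (g, y)" by (cases v)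
    show "u \<otimes>\<^bsub>wreath A B\<^esub> v \<in> carrier (wreath A B)"
      using u v by (auto simp: wreath_carrier wreath_mult PiE_iff)
  next
    show "\<one>\<^bsub>wreath A B\<^esub> \<in> carrier (wreath A B)"
      by (auto simp: wreath_carrier wreath_one)
  next
    fix u v w assume u: "u \<in> carrier (wreath A B)" and v: "v \<in> carrier (wreath A B)"
      and w: "w \<in> carrier (wreath A B)"
    obtain f x where [simp]: "u = (f, x)" by (cases u)
    obtain g y where [simp]: "v = (g, y)" by (cases v)
    obtain h z where [simp]: "w = (h, z)" by (cases w)
    have x: "x \<in> carrier B" and y: "y \<in> carrier B" and z: "z \<in> carrier B"
      and f: "f \<in> carrier B \<rightarrow>\<^sub>E carrier A" and g: "g \<in> carrier B \<rightarrow>\<^sub>E carrier A"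
      and h: "h \<in> carrier B \<rightarrow>\<^sub>E carrier A"
      using u v w by (auto simp: wreath_carrier)
    have "\<And>b. b \<in> carrier B \<Longrightarrow> inv\<^bsub>B\<^esub> (x \<otimes>\<^bsub>B\<^esub> y) \<otimes>\<^bsub>B\<^esub> b = inv\<^bsub>B\<^esub> y \<otimes>\<^bsub>B\<^esub> (inv\<^bsub>B\<^esub> x \<otimes>\<^bsub>B\<^esub> b)"
      using x y by (simp add: B.inv_mult_group B.m_assoc)
    moreover have "\<And>b. b \<in> carrier B \<Longrightarrow> f b \<otimes>\<^bsub>A\<^esub> g (inv\<^bsub>B\<^esub> x \<otimes>\<^bsub>B\<^esub> b) \<otimes>\<^bsub>A\<^esub> h (inv\<^bsub>B\<^esub> y \<otimes>\<^bsub>B\<^esub> (inv\<^bsub>B\<^esub> x \<otimes>\<^bsub>B\<^esub> b)) =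
            f b \<otimes>\<^bsub>A\<^esub> (g (inv\<^bsub>B\<^esub> x \<otimes>\<^bsub>B\<^esub> b) \<otimes>\<^bsub>A\<^esub> h (inv\<^bsub>B\<^esub> y \<otimes>\<^bsub>B\<^esub> (inv\<^bsub>B\<^esub> x \<otimes>\<^bsub>B\<^esub> b)))"
    proof -
      fix b assume b: "b \<in> carrier B"
      have 1: "f b \<in> carrier A" using f b by (rule PiE_mem)
      have 2: "g (inv\<^bsub>B\<^esub> x \<otimes>\<^bsub>B\<^esub> b) \<in> carrier A" using g by (rule PiE_mem) (use x b in simp)
      have 3: "h (inv\<^bsub>B\<^esub> y \<otimes>\<^bsub>B\<^esub> (inv\<^bsub>B\<^esub> x \<otimes>\<^bsub>B\<^esub> b)) \<in> carrier A" using h by (rule PiE_mem) (use x y b in simp)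
      show "?thesis b" using 1 2 3 by (rule A.m_assoc)
    qed
    ultimately show "u \<otimes>\<^bsub>wreath A B\<^esub> v \<otimes>\<^bsub>wreath A B\<^esub> w = u \<otimes>\<^bsub>wreath A B\<^esub> (v \<otimes>\<^bsub>wreath A B\<^esub> w)"
      using x y z f g h
      by (auto simp: wreath_mult B.m_assoc intro!: restrict_ext)
  next
    fix u assume u: "u \<in> carrier (wreath A B)"
    obtain f x where [simp]: "u = (f, x)" by (cases u)
    have x: "x \<in> carrier B" and f: "f \<in> carrier B \<rightarrow>\<^sub>E carrier A"
      using u by (auto simp: wreath_carrier)
    have "\<one>\<^bsub>wreath A B\<^esub> \<otimes>\<^bsub>wreath A B\<^esub> u = ((\<lambda>b\<in>carrier B. (\<lambda>b\<in>carrier B. \<one>\<^bsub>A\<^esub>) b \<otimes>\<^bsub>A\<^esub> f (inv\<^bsub>B\<^esub> \<one>\<^bsub>B\<^esub> \<otimes>\<^bsub>B\<^esub> b)), \<one>\<^bsub>B\<^esub> \<otimes>\<^bsub>B\<^esub> x)"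
      by (simp only: wreath_one wreath_mult \<open>u = (f,x)\<close>)
    also have "(\<lambda>b\<in>carrier B. (\<lambda>b\<in>carrier B. \<one>\<^bsub>A\<^esub>) b \<otimes>\<^bsub>A\<^esub> f (inv\<^bsub>B\<^esub> \<one>\<^bsub>B\<^esub> \<otimes>\<^bsub>B\<^esub> b)) = (\<lambda>i\<in>carrier B. \<one>\<^bsub>A\<^esub> \<otimes>\<^bsub>A\<^esub> f i)"
      by (rule restrict_ext) simp
    also have "(\<lambda>i\<in>carrier B. \<one>\<^bsub>A\<^esub> \<otimes>\<^bsub>A\<^esub> f i) = (\<lambda>i\<in>carrier B. f i)"
      by (rule restrict_ext) (rule A.l_one, rule PiE_mem[OF f])
    also have "\<dots> = f" using f by simp
    finally show "\<one>\<^bsub>wreath A B\<^esub> \<otimes>\<^bsub>wreath A B\<^esub> u = u"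
      using x by simp
  next
    fix u assume u: "u \<in> carrier (wreath A B)"
    obtain f x where [simp]: "u = (f, x)" by (cases u)
    have x: "x \<in> carrier B" and f: "f \<in> carrier B \<rightarrow>\<^sub>E carrier A"
      using u by (auto simp: wreath_carrier)
    have fA: "\<And>c. c \<in> carrier B \<Longrightarrow> f c \<in> carrier A" using f by (rule PiE_mem)
    let ?g = "\<lambda>b\<in>carrier B. inv\<^bsub>A\<^esub> (f (x \<otimes>\<^bsub>B\<^esub> b))"
    have "(?g, inv\<^bsub>B\<^esub> x) \<in> carrier (wreath A B)"
      using x f by (auto simp: wreath_carrier PiE_mem)
    moreover have "(?g, inv\<^bsub>B\<^esub> x) \<otimes>\<^bsub>wreath A B\<^esub> (f, x) = \<one>\<^bsub>wreath A B\<^esub>"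
      using x f by (auto simp: wreath_one wreath_mult fA B.m_assoc[symmetric] intro!: restrict_ext)
    ultimately show "\<exists>v\<in>carrier (wreath A B). v \<otimes>\<^bsub>wreath A B\<^esub> u = \<one>\<^bsub>wreath A B\<^esub>" by auto
  qed
qed

primrec cyc :: "('a,'c) monoid_scheme \<Rightarrow> ('b,'e) monoid_scheme \<Rightarrow> ('b \<Rightarrow> 'a) \<Rightarrow> 'b \<Rightarrow> nat \<Rightarrow> 'b \<Rightarrow> 'a" where
  "cyc A B f x 0 c = \<one>\<^bsub>A\<^esub>"
| "cyc A B f x (Suc n) c = f c \<otimes>\<^bsub>A\<^esub> cyc A B f x n (inv\<^bsub>B\<^esub> x \<otimes>\<^bsub>B\<^esub> c)"

locale wr = A: group A + B: group B
  for A :: "('a,'c) monoid_scheme" and B :: "('b,'e) monoid_scheme"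
begin

abbreviation W where "W \<equiv> wreath A B"

lemma W_group: "group W" by (rule wreath_group) (unfold_locales)

lemma cyc_closed:
  assumes f: "f \<in> carrier B \<rightarrow>\<^sub>E carrier A" and x: "x \<in> carrier B"
  shows "c \<in> carrier B \<Longrightarrow> cyc A B f x n c \<in> carrier A"
proof (induction n arbitrary: c)
  case 0 then show ?case by simp
next
  case (Suc n)
  have "f c \<in> carrier A" using f Suc.prems by (rule PiE_mem)
  moreover have "cyc A B f x n (inv\<^bsub>B\<^esub> x \<otimes>\<^bsub>B\<^esub> c) \<in> carrier A"
    using Suc x by simp
  ultimately show ?case by simp
qed

lemma cyc_Suc2:
  assumes f: "f \<in> carrier B \<rightarrow>\<^sub>E carrier A" and x: "x \<in> carrier B"
  shows "c \<in> carrier B \<Longrightarrow> cyc A B f x (Suc n) c = cyc A B f x n c \<otimes>\<^bsub>A\<^esub> f ((inv\<^bsub>B\<^esub> x) [^]\<^bsub>B\<^esub> n \<otimes>\<^bsub>B\<^esub> c)"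
proof (induction n arbitrary: c)
  case 0
  have "f c \<in> carrier A" using f 0 by (rule PiE_mem)
  then show ?case using 0 by simp
next
  case (Suc n)
  have c1: "inv\<^bsub>B\<^esub> x \<otimes>\<^bsub>B\<^esub> c \<in> carrier B" using x Suc.prems by simp
  have e: "(inv\<^bsub>B\<^esub> x) [^]\<^bsub>B\<^esub> n \<otimes>\<^bsub>B\<^esub> (inv\<^bsub>B\<^esub> x \<otimes>\<^bsub>B\<^esub> c) = (inv\<^bsub>B\<^esub> x) [^]\<^bsub>B\<^esub> Suc n \<otimes>\<^bsub>B\<^esub> c"
    using x Suc.prems by (simp add: B.m_assoc)
  have "cyc A B f x (Suc (Suc n)) c = f c \<otimes>\<^bsub>A\<^esub> (cyc A B f x n (inv\<^bsub>B\<^esub> x \<otimes>\<^bsub>B\<^esub> c) \<otimes>\<^bsub>A\<^esub> f ((inv\<^bsub>B\<^esub> x) [^]\<^bsub>B\<^esub> Suc n \<otimes>\<^bsub>B\<^esub> c))"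
    using Suc.IH[OF c1] e by simp
  also have "\<dots> = cyc A B f x (Suc n) c \<otimes>\<^bsub>A\<^esub> f ((inv\<^bsub>B\<^esub> x) [^]\<^bsub>B\<^esub> Suc n \<otimes>\<^bsub>B\<^esub> c)"
  proof -
    have 1: "f c \<in> carrier A" using f Suc.prems by (rule PiE_mem)
    have 2: "cyc A B f x n (inv\<^bsub>B\<^esub> x \<otimes>\<^bsub>B\<^esub> c) \<in> carrier A" using cyc_closed[OF f x c1] .
    have 3: "f ((inv\<^bsub>B\<^esub> x) [^]\<^bsub>B\<^esub> Suc n \<otimes>\<^bsub>B\<^esub> c) \<in> carrier A"
      using f by (rule PiE_mem) (use x Suc.prems in simp)
    show ?thesis using 1 2 3 by (simp add: A.m_assoc)
  qed
  finally show ?case .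
qed

lemma W_pow:
  assumes f: "f \<in> carrier B \<rightarrow>\<^sub>E carrier A" and x: "x \<in> carrier B"
  shows "(f, x) [^]\<^bsub>W\<^esub> n = ((\<lambda>c\<in>carrier B. cyc A B f x n c), x [^]\<^bsub>B\<^esub> n)"
proof (induction n)
  case 0
  show ?case by (simp add: wreath_one restrict_def)
next
  case (Suc n)
  interpret W: group W by (rule W_group)
  have "(f, x) [^]\<^bsub>W\<^esub> Suc n = ((\<lambda>c\<in>carrier B. cyc A B f x n c), x [^]\<^bsub>B\<^esub> n) \<otimes>\<^bsub>W\<^esub> (f, x)"
    by (simp only: W.nat_pow_Suc Suc)
  also have "\<dots> = ((\<lambda>c\<in>carrier B. cyc A B f x (Suc n) c), x [^]\<^bsub>B\<^esub> Suc n)"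
    unfolding wreath_mult
  proof (intro arg_cong2[where f = Pair] restrict_ext)
    fix c assume c: "c \<in> carrier B"
    have "inv\<^bsub>B\<^esub> (x [^]\<^bsub>B\<^esub> n) = (inv\<^bsub>B\<^esub> x) [^]\<^bsub>B\<^esub> n" using x by (simp add: B.nat_pow_inv)
    then show "(\<lambda>c\<in>carrier B. cyc A B f x n c) c \<otimes>\<^bsub>A\<^esub> f (inv\<^bsub>B\<^esub> (x [^]\<^bsub>B\<^esub> n) \<otimes>\<^bsub>B\<^esub> c) = cyc A B f x (Suc n) c"
      using c by (simp only: cyc_Suc2[OF f x c] restrict_apply' )
  qed simp
  finally show ?case .
qed

lemma cyc_one:
  assumes F: "F \<in> carrier B \<rightarrow>\<^sub>E carrier A" and c: "c \<in> carrier B"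
  shows "cyc A B F \<one>\<^bsub>B\<^esub> q c = F c [^]\<^bsub>A\<^esub> q"
proof (induction q)
  case 0 then show ?case by simp
next
  case (Suc q)
  have "F c \<in> carrier A" using F c by (rule PiE_mem)
  then show ?case using Suc c by simp (metis A.nat_pow_Suc A.nat_pow_Suc2)
qed

lemma W_pow_mult:
  assumes f: "f \<in> carrier B \<rightarrow>\<^sub>E carrier A" and x: "x \<in> carrier B" and xr: "x [^]\<^bsub>B\<^esub> r = \<one>\<^bsub>B\<^esub>"
  shows "(f, x) [^]\<^bsub>W\<^esub> (r * q) = ((\<lambda>c\<in>carrier B. (cyc A B f x r c) [^]\<^bsub>A\<^esub> q), \<one>\<^bsub>B\<^esub>)"
proof -
  interpret W: group W by (rule W_group)
  let ?F = "\<lambda>c\<in>carrier B. cyc A B f x r c"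
  have F: "?F \<in> carrier B \<rightarrow>\<^sub>E carrier A" using cyc_closed[OF f x] by simp
  have fx: "(f,x) \<in> carrier W" using f x by (simp add: wreath_carrier)
  have "(f, x) [^]\<^bsub>W\<^esub> (r * q) = ((f, x) [^]\<^bsub>W\<^esub> r) [^]\<^bsub>W\<^esub> q"
    using fx by (simp add: W.nat_pow_pow)
  also have "\<dots> = (?F, \<one>\<^bsub>B\<^esub>) [^]\<^bsub>W\<^esub> q" using W_pow[OF f x] xr by simp
  also have "\<dots> = ((\<lambda>c\<in>carrier B. cyc A B ?F \<one>\<^bsub>B\<^esub> q c), \<one>\<^bsub>B\<^esub>)"
    using W_pow[OF F B.one_closed] by simp
  also have "(\<lambda>c\<in>carrier B. cyc A B ?F \<one>\<^bsub>B\<^esub> q c) = (\<lambda>c\<in>carrier B. (cyc A B f x r c) [^]\<^bsub>A\<^esub> q)"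
    by (rule restrict_ext) (simp add: cyc_one[OF F])
  finally show ?thesis .
qed

lemma W_pow_mult_one:
  assumes f: "f \<in> carrier B \<rightarrow>\<^sub>E carrier A" and x: "x \<in> carrier B" and xr: "x [^]\<^bsub>B\<^esub> r = \<one>\<^bsub>B\<^esub>"
  shows "(f, x) [^]\<^bsub>W\<^esub> (r * q) = \<one>\<^bsub>W\<^esub> \<longleftrightarrow> (\<forall>c\<in>carrier B. (cyc A B f x r c) [^]\<^bsub>A\<^esub> q = \<one>\<^bsub>A\<^esub>)"
  unfolding W_pow_mult[OF assms] wreath_one
  by (auto simp: restrict_def fun_eq_iff split: if_splits)

end

lemma (in group) swap_pow_one:
  assumes u: "u \<in> carrier G" and v: "v \<in> carrier G"
  shows "(u \<otimes> v) [^] (q::nat) = \<one> \<Longrightarrow> (v \<otimes> u) [^] q = \<one>"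
proof -
  have key: "(v \<otimes> u) [^] Suc n = v \<otimes> (u \<otimes> v) [^] n \<otimes> u" for n
  proof (induction n)
    case 0 then show ?case using u v by simp
  next
    case (Suc n)
    have "(v \<otimes> u) [^] Suc (Suc n) = (v \<otimes> (u \<otimes> v) [^] n \<otimes> u) \<otimes> (v \<otimes> u)"
      using Suc by (simp only: nat_pow_Suc[of _ "Suc n"])
    also have "\<dots> = v \<otimes> ((u \<otimes> v) [^] n \<otimes> (u \<otimes> v)) \<otimes> u"
      using u v by (simp add: m_assoc)
    also have "\<dots> = v \<otimes> (u \<otimes> v) [^] Suc n \<otimes> u" by simp
    finally show ?case .
  qed
  assume h: "(u \<otimes> v) [^] q = \<one>"
  have "(v \<otimes> u) [^] q \<otimes> (v \<otimes> u) = \<one> \<otimes> (v \<otimes> u)"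
    using key[of q] h u v by (simp add: m_assoc)
  then show ?thesis using u v by (metis m_closed nat_pow_closed one_closed r_cancel)
qed

definition rep :: "'x set \<Rightarrow> 'x" where "rep C = (SOME c. c \<in> C)"

locale wrf = wr +
  assumes finA: "finite (carrier A)" and finB: "finite (carrier B)"
begin


lemma cyc_cong:
  assumes x: "x \<in> carrier B"
  shows "c \<in> carrier B \<Longrightarrow> (\<And>i. i < n \<Longrightarrow> f ((inv\<^bsub>B\<^esub> x) [^]\<^bsub>B\<^esub> i \<otimes>\<^bsub>B\<^esub> c) = g ((inv\<^bsub>B\<^esub> x) [^]\<^bsub>B\<^esub> i \<otimes>\<^bsub>B\<^esub> c))
     \<Longrightarrow> cyc A B f x n c = cyc A B g x n c"
proof (induction n arbitrary: c)
  case 0 then show ?case by simp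
next
  case (Suc n)
  have "f c = g c" using Suc.prems(2)[of 0] Suc.prems(1) by simp
  moreover have "cyc A B f x n (inv\<^bsub>B\<^esub> x \<otimes>\<^bsub>B\<^esub> c) = cyc A B g x n (inv\<^bsub>B\<^esub> x \<otimes>\<^bsub>B\<^esub> c)"
  proof (rule Suc.IH)
    show "inv\<^bsub>B\<^esub> x \<otimes>\<^bsub>B\<^esub> c \<in> carrier B" using x Suc.prems by simp
    fix i assume "i < n"
    then have "f ((inv\<^bsub>B\<^esub> x) [^]\<^bsub>B\<^esub> Suc i \<otimes>\<^bsub>B\<^esub> c) = g ((inv\<^bsub>B\<^esub> x) [^]\<^bsub>B\<^esub> Suc i \<otimes>\<^bsub>B\<^esub> c)"
      using Suc.prems(2)[of "Suc i"] by simp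
    moreover have "(inv\<^bsub>B\<^esub> x) [^]\<^bsub>B\<^esub> Suc i \<otimes>\<^bsub>B\<^esub> c = (inv\<^bsub>B\<^esub> x) [^]\<^bsub>B\<^esub> i \<otimes>\<^bsub>B\<^esub> (inv\<^bsub>B\<^esub> x \<otimes>\<^bsub>B\<^esub> c)"
      using x Suc.prems(1) by (simp add: B.m_assoc)
    ultimately show "f ((inv\<^bsub>B\<^esub> x) [^]\<^bsub>B\<^esub> i \<otimes>\<^bsub>B\<^esub> (inv\<^bsub>B\<^esub> x \<otimes>\<^bsub>B\<^esub> c)) = g ((inv\<^bsub>B\<^esub> x) [^]\<^bsub>B\<^esub> i \<otimes>\<^bsub>B\<^esub> (inv\<^bsub>B\<^esub> x \<otimes>\<^bsub>B\<^esub> c))"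
      by simp
  qed
  ultimately show ?case by simp
qed

definition H where "H x = generate B {inv\<^bsub>B\<^esub> x}"
definition R where "R x = (\<lambda>a. rep (H x #>\<^bsub>B\<^esub> a)) ` carrier B"

lemma H_sub: "x \<in> carrier B \<Longrightarrow> subgroup (H x) B"
  unfolding H_def by (rule B.generate_is_subgroup) simp

lemma H_eq: "x \<in> carrier B \<Longrightarrow> H x = {(inv\<^bsub>B\<^esub> x) [^]\<^bsub>B\<^esub> k | k. k \<in> (UNIV :: nat set)}"
  unfolding H_def by (rule B.generate_pow_on_finite_carrier[OF finB]) simp

lemma card_H: "x \<in> carrier B \<Longrightarrow> card (H x) = B.ord x"
  unfolding H_def using B.generate_pow_card[of "inv\<^bsub>B\<^esub> x"] by simp

lemma rep_in: "x \<in> carrier B \<Longrightarrow> a \<in> carrier B \<Longrightarrow> rep (H x #>\<^bsub>B\<^esub> a) \<in> H x #>\<^bsub>B\<^esub> a"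
  unfolding rep_def by (rule someI[of _ a]) (rule B.rcos_self, auto intro: H_sub)

lemma rep_carrier: "x \<in> carrier B \<Longrightarrow> a \<in> carrier B \<Longrightarrow> rep (H x #>\<^bsub>B\<^esub> a) \<in> carrier B"
  using rep_in B.r_coset_subset_G[of "H x" a] H_sub[of x] subgroup.subset by blast

lemma rep_coset: "x \<in> carrier B \<Longrightarrow> a \<in> carrier B \<Longrightarrow> H x #>\<^bsub>B\<^esub> rep (H x #>\<^bsub>B\<^esub> a) = H x #>\<^bsub>B\<^esub> a"
  using B.repr_independence[OF rep_in _ H_sub] by simp

lemma R_sub: "x \<in> carrier B \<Longrightarrow> R x \<subseteq> carrier B"
  unfolding R_def using rep_carrier by blast

lemma R_rep: "x \<in> carrier B \<Longrightarrow> c \<in> R x \<Longrightarrow> rep (H x #>\<^bsub>B\<^esub> c) = c"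
  unfolding R_def using rep_coset by auto

lemma R_unique:
  assumes x: "x \<in> carrier B" and c0: "c0 \<in> R x" and c1: "c1 \<in> R x" and h: "c1 \<in> H x #>\<^bsub>B\<^esub> c0"
  shows "c1 = c0"
proof -
  have c0B: "c0 \<in> carrier B" using R_sub[OF x] c0 by (rule subsetD)
  have "H x #>\<^bsub>B\<^esub> c0 = H x #>\<^bsub>B\<^esub> c1"
    using B.repr_independence[OF h c0B H_sub[OF x]] .
  then have "rep (H x #>\<^bsub>B\<^esub> c0) = rep (H x #>\<^bsub>B\<^esub> c1)" by (rule arg_cong)
  then show ?thesis unfolding R_rep[OF x c0] R_rep[OF x c1] by (rule sym)
qed

lemma R_card: "x \<in> carrier B \<Longrightarrow> card (R x) * B.ord x = order B"
proof -
  assume x: "x \<in> carrier B"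
  have "R x = rep ` (rcosets\<^bsub>B\<^esub> H x)"
    unfolding R_def RCOSETS_def by auto
  moreover have "inj_on rep (rcosets\<^bsub>B\<^esub> H x)"
  proof (rule inj_onI)
    fix C C' assume C: "C \<in> rcosets\<^bsub>B\<^esub> H x" and C': "C' \<in> rcosets\<^bsub>B\<^esub> H x" and e: "rep C = rep C'"
    obtain a where a: "a \<in> carrier B" "C = H x #>\<^bsub>B\<^esub> a" using C unfolding RCOSETS_def by auto
    obtain a' where a': "a' \<in> carrier B" "C' = H x #>\<^bsub>B\<^esub> a'" using C' unfolding RCOSETS_def by auto
    show "C = C'" using rep_coset[OF x a(1)] rep_coset[OF x a'(1)] a a' e by metis
  qed
  ultimately have "card (R x) = card (rcosets\<^bsub>B\<^esub> H x)" by (simp add: card_image)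
  then show ?thesis using B.lagrange[OF H_sub[OF x]] card_H[OF x] by simp
qed

lemma R_cover:
  assumes x: "x \<in> carrier B" and c: "c \<in> carrier B"
  shows "\<exists>c0\<in>R x. \<exists>k::nat. c = (inv\<^bsub>B\<^esub> x) [^]\<^bsub>B\<^esub> k \<otimes>\<^bsub>B\<^esub> c0"
proof -
  let ?c0 = "rep (H x #>\<^bsub>B\<^esub> c)"
  have "c \<in> H x #>\<^bsub>B\<^esub> c" using B.rcos_self[OF c H_sub[OF x]] .
  then have "c \<in> H x #>\<^bsub>B\<^esub> ?c0" using rep_coset[OF x c] by simp
  then obtain h where h: "h \<in> H x" "c = h \<otimes>\<^bsub>B\<^esub> ?c0" unfolding r_coset_def by auto
  obtain k :: nat where "h = (inv\<^bsub>B\<^esub> x) [^]\<^bsub>B\<^esub> k" using h(1) unfolding H_eq[OF x] by blast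
  moreover have "?c0 \<in> R x" unfolding R_def using c by blast
  ultimately show ?thesis using h(2) by blast
qed

lemma R_avoid:
  assumes x: "x \<in> carrier B" and c0: "c0 \<in> R x" and i: "0 < i" "i < B.ord x"
  shows "(inv\<^bsub>B\<^esub> x) [^]\<^bsub>B\<^esub> i \<otimes>\<^bsub>B\<^esub> c0 \<notin> R x"
proof
  assume c1: "(inv\<^bsub>B\<^esub> x) [^]\<^bsub>B\<^esub> i \<otimes>\<^bsub>B\<^esub> c0 \<in> R x"
  have c0B: "c0 \<in> carrier B" using R_sub[OF x] c0 by (rule subsetD)
  have "(inv\<^bsub>B\<^esub> x) [^]\<^bsub>B\<^esub> i \<in> H x" using H_eq[OF x] by auto
  then have "(inv\<^bsub>B\<^esub> x) [^]\<^bsub>B\<^esub> i \<otimes>\<^bsub>B\<^esub> c0 \<in> H x #>\<^bsub>B\<^esub> c0"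
    using B.rcosI[OF _ _ c0B] subgroup.subset[OF H_sub[OF x]] by blast
  then have "(inv\<^bsub>B\<^esub> x) [^]\<^bsub>B\<^esub> i \<otimes>\<^bsub>B\<^esub> c0 = \<one>\<^bsub>B\<^esub> \<otimes>\<^bsub>B\<^esub> c0"
    using R_unique[OF x c0 c1] c0B by simp
  then have "(inv\<^bsub>B\<^esub> x) [^]\<^bsub>B\<^esub> i = \<one>\<^bsub>B\<^esub>"
    using c0B x by (metis B.inv_closed B.nat_pow_closed B.one_closed B.r_cancel)
  then have "B.ord x dvd i" using x B.pow_eq_id[of "inv\<^bsub>B\<^esub> x" i] by simp
  then show False using i by (simp add: nat_dvd_not_less)
qed

end

context wrf
begin

lemma ord_pos: "x \<in> carrier B \<Longrightarrow> 0 < B.ord x"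
  using B.ord_ge_1[OF finB] by fastforce

lemma invx_pow_ord: "x \<in> carrier B \<Longrightarrow> (inv\<^bsub>B\<^esub> x) [^]\<^bsub>B\<^esub> B.ord x = \<one>\<^bsub>B\<^esub>"
  by (simp add: B.nat_pow_inv)

lemma cyc_shift:
  assumes f: "f \<in> carrier B \<rightarrow>\<^sub>E carrier A" and x: "x \<in> carrier B" and c: "c \<in> carrier B"
  shows "\<exists>u\<in>carrier A. \<exists>v\<in>carrier A. cyc A B f x (B.ord x) c = v \<otimes>\<^bsub>A\<^esub> u \<and>
           cyc A B f x (B.ord x) (inv\<^bsub>B\<^esub> x \<otimes>\<^bsub>B\<^esub> c) = u \<otimes>\<^bsub>A\<^esub> v"
proof -
  obtain r' where r': "B.ord x = Suc r'" using ord_pos[OF x] by (cases "B.ord x") auto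
  have c1: "inv\<^bsub>B\<^esub> x \<otimes>\<^bsub>B\<^esub> c \<in> carrier B" using x c by simp
  let ?u = "cyc A B f x r' (inv\<^bsub>B\<^esub> x \<otimes>\<^bsub>B\<^esub> c)"
  have "(inv\<^bsub>B\<^esub> x) [^]\<^bsub>B\<^esub> r' \<otimes>\<^bsub>B\<^esub> (inv\<^bsub>B\<^esub> x \<otimes>\<^bsub>B\<^esub> c) = (inv\<^bsub>B\<^esub> x) [^]\<^bsub>B\<^esub> Suc r' \<otimes>\<^bsub>B\<^esub> c"
    using x c by (simp add: B.m_assoc)
  also have "\<dots> = c" using invx_pow_ord[OF x] r' c by simp
  finally have e: "(inv\<^bsub>B\<^esub> x) [^]\<^bsub>B\<^esub> r' \<otimes>\<^bsub>B\<^esub> (inv\<^bsub>B\<^esub> x \<otimes>\<^bsub>B\<^esub> c) = c" .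
  have 1: "cyc A B f x (B.ord x) c = f c \<otimes>\<^bsub>A\<^esub> ?u" using r' by simp
  have 2: "cyc A B f x (B.ord x) (inv\<^bsub>B\<^esub> x \<otimes>\<^bsub>B\<^esub> c) = ?u \<otimes>\<^bsub>A\<^esub> f c"
    using r' cyc_Suc2[OF f x c1, of r'] e by simp
  have "?u \<in> carrier A" using cyc_closed[OF f x c1] .
  moreover have "f c \<in> carrier A" using f c by (rule PiE_mem)
  ultimately show ?thesis using 1 2 by blast
qed

lemma P_shift:
  assumes f: "f \<in> carrier B \<rightarrow>\<^sub>E carrier A" and x: "x \<in> carrier B" and c: "c \<in> carrier B"
  shows "cyc A B f x (B.ord x) c [^]\<^bsub>A\<^esub> (q::nat) = \<one>\<^bsub>A\<^esub> \<longleftrightarrow>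
         cyc A B f x (B.ord x) (inv\<^bsub>B\<^esub> x \<otimes>\<^bsub>B\<^esub> c) [^]\<^bsub>A\<^esub> q = \<one>\<^bsub>A\<^esub>"
  using cyc_shift[OF f x c] A.swap_pow_one by metis

lemma P_shift_k:
  assumes f: "f \<in> carrier B \<rightarrow>\<^sub>E carrier A" and x: "x \<in> carrier B" and c: "c \<in> carrier B"
  shows "cyc A B f x (B.ord x) c [^]\<^bsub>A\<^esub> (q::nat) = \<one>\<^bsub>A\<^esub> \<longleftrightarrow>
         cyc A B f x (B.ord x) ((inv\<^bsub>B\<^esub> x) [^]\<^bsub>B\<^esub> (k::nat) \<otimes>\<^bsub>B\<^esub> c) [^]\<^bsub>A\<^esub> q = \<one>\<^bsub>A\<^esub>"
proof (induction k)
  case 0 then show ?case using c by simp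
next
  case (Suc k)
  have ck: "(inv\<^bsub>B\<^esub> x) [^]\<^bsub>B\<^esub> k \<otimes>\<^bsub>B\<^esub> c \<in> carrier B" using x c by simp
  have "(inv\<^bsub>B\<^esub> x) [^]\<^bsub>B\<^esub> Suc k \<otimes>\<^bsub>B\<^esub> c = inv\<^bsub>B\<^esub> x \<otimes>\<^bsub>B\<^esub> ((inv\<^bsub>B\<^esub> x) [^]\<^bsub>B\<^esub> k \<otimes>\<^bsub>B\<^esub> c)"
    by (simp only: B.nat_pow_Suc2[OF B.inv_closed[OF x]]) (simp add: B.m_assoc x c)
  then show ?case using Suc P_shift[OF f x ck] by simp
qed

lemma all_B_iff_R:
  assumes f: "f \<in> carrier B \<rightarrow>\<^sub>E carrier A" and x: "x \<in> carrier B"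
  shows "(\<forall>c\<in>carrier B. cyc A B f x (B.ord x) c [^]\<^bsub>A\<^esub> (q::nat) = \<one>\<^bsub>A\<^esub>) \<longleftrightarrow>
         (\<forall>c\<in>R x. cyc A B f x (B.ord x) c [^]\<^bsub>A\<^esub> q = \<one>\<^bsub>A\<^esub>)"
proof
  assume "\<forall>c\<in>carrier B. cyc A B f x (B.ord x) c [^]\<^bsub>A\<^esub> q = \<one>\<^bsub>A\<^esub>"
  then show "\<forall>c\<in>R x. cyc A B f x (B.ord x) c [^]\<^bsub>A\<^esub> q = \<one>\<^bsub>A\<^esub>" using R_sub[OF x] by blast
next
  assume h: "\<forall>c\<in>R x. cyc A B f x (B.ord x) c [^]\<^bsub>A\<^esub> q = \<one>\<^bsub>A\<^esub>"
  show "\<forall>c\<in>carrier B. cyc A B f x (B.ord x) c [^]\<^bsub>A\<^esub> q = \<one>\<^bsub>A\<^esub>"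
  proof
    fix c assume c: "c \<in> carrier B"
    obtain c0 and k :: nat where c0: "c0 \<in> R x" and k: "c = (inv\<^bsub>B\<^esub> x) [^]\<^bsub>B\<^esub> k \<otimes>\<^bsub>B\<^esub> c0"
      using R_cover[OF x c] by blast
    have c0B: "c0 \<in> carrier B" using R_sub[OF x] c0 by (rule subsetD)
    show "cyc A B f x (B.ord x) c [^]\<^bsub>A\<^esub> q = \<one>\<^bsub>A\<^esub>"
      using P_shift_k[OF f x c0B, of q k] h c0 k by simp
  qed
qed

end

context wrf
begin

definition Phi where
  "Phi x f = (\<lambda>y\<in>carrier B. if y \<in> R x then cyc A B f x (B.ord x) y else f y)"

lemma Phi_mem:
  assumes f: "f \<in> carrier B \<rightarrow>\<^sub>E carrier A" and x: "x \<in> carrier B"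
  shows "Phi x f \<in> carrier B \<rightarrow>\<^sub>E carrier A"
  unfolding Phi_def
proof (rule restrict_PiE_iff[THEN iffD2], intro ballI)
  fix y assume y: "y \<in> carrier B"
  have "cyc A B f x (B.ord x) y \<in> carrier A" using cyc_closed[OF f x y] .
  moreover have "f y \<in> carrier A" using f y by (rule PiE_mem)
  ultimately show "(if y \<in> R x then cyc A B f x (B.ord x) y else f y) \<in> carrier A" by simp
qed

lemma Phi_inj:
  assumes x: "x \<in> carrier B"
  shows "inj_on (Phi x) (carrier B \<rightarrow>\<^sub>E carrier A)"
proof (rule inj_onI)
  fix f g assume f: "f \<in> carrier B \<rightarrow>\<^sub>E carrier A" and g: "g \<in> carrier B \<rightarrow>\<^sub>E carrier A"
    and e: "Phi x f = Phi x g"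
  have pt: "\<And>y. y \<in> carrier B \<Longrightarrow> (if y \<in> R x then cyc A B f x (B.ord x) y else f y) =
      (if y \<in> R x then cyc A B g x (B.ord x) y else g y)"
  proof -
    fix y assume y: "y \<in> carrier B"
    have "Phi x f y = Phi x g y" using e by simp
    then show "?thesis y" using y by (simp only: Phi_def restrict_apply')
  qed
  have out: "\<And>y. y \<in> carrier B \<Longrightarrow> y \<notin> R x \<Longrightarrow> f y = g y"
  proof -
    fix y assume y: "y \<in> carrier B" "y \<notin> R x"
    show "f y = g y" using pt[OF y(1)] y(2) by simp
  qed
  obtain r' where r': "B.ord x = Suc r'" using ord_pos[OF x] by (cases "B.ord x") auto
  show "f = g"
  proof (rule PiE_ext[OF f g])
    fix c assume c: "c \<in> carrier B"
    show "f c = g c"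
    proof (cases "c \<in> R x")
      case False then show ?thesis using out c by blast
    next
      case True
      have c1: "inv\<^bsub>B\<^esub> x \<otimes>\<^bsub>B\<^esub> c \<in> carrier B" using x c by simp
      have u: "cyc A B f x r' (inv\<^bsub>B\<^esub> x \<otimes>\<^bsub>B\<^esub> c) = cyc A B g x r' (inv\<^bsub>B\<^esub> x \<otimes>\<^bsub>B\<^esub> c)"
      proof (rule cyc_cong[OF x c1])
        fix i assume i: "i < r'"
        have eq: "(inv\<^bsub>B\<^esub> x) [^]\<^bsub>B\<^esub> i \<otimes>\<^bsub>B\<^esub> (inv\<^bsub>B\<^esub> x \<otimes>\<^bsub>B\<^esub> c) = (inv\<^bsub>B\<^esub> x) [^]\<^bsub>B\<^esub> Suc i \<otimes>\<^bsub>B\<^esub> c"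
          using x c by (simp add: B.m_assoc)
        have "(inv\<^bsub>B\<^esub> x) [^]\<^bsub>B\<^esub> Suc i \<otimes>\<^bsub>B\<^esub> c \<notin> R x"
          using R_avoid[OF x True, of "Suc i"] i r' by simp
        moreover have "(inv\<^bsub>B\<^esub> x) [^]\<^bsub>B\<^esub> Suc i \<otimes>\<^bsub>B\<^esub> c \<in> carrier B" using x c by simp
        ultimately show "f ((inv\<^bsub>B\<^esub> x) [^]\<^bsub>B\<^esub> i \<otimes>\<^bsub>B\<^esub> (inv\<^bsub>B\<^esub> x \<otimes>\<^bsub>B\<^esub> c)) = g ((inv\<^bsub>B\<^esub> x) [^]\<^bsub>B\<^esub> i \<otimes>\<^bsub>B\<^esub> (inv\<^bsub>B\<^esub> x \<otimes>\<^bsub>B\<^esub> c))"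
          using out eq by simp
      qed
      have "cyc A B f x (B.ord x) c = cyc A B g x (B.ord x) c" using pt[OF c] True by simp
      then have "f c \<otimes>\<^bsub>A\<^esub> cyc A B f x r' (inv\<^bsub>B\<^esub> x \<otimes>\<^bsub>B\<^esub> c) = g c \<otimes>\<^bsub>A\<^esub> cyc A B f x r' (inv\<^bsub>B\<^esub> x \<otimes>\<^bsub>B\<^esub> c)"
        using r' u by simp
      moreover have "f c \<in> carrier A" using f c by (rule PiE_mem)
      moreover have "g c \<in> carrier A" using g c by (rule PiE_mem)
      moreover have "cyc A B f x r' (inv\<^bsub>B\<^esub> x \<otimes>\<^bsub>B\<^esub> c) \<in> carrier A" using cyc_closed[OF f x c1] .
      ultimately show ?thesis using A.r_cancel by blast
    qed
  qed
qed

lemma Phi_surj: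
  assumes x: "x \<in> carrier B"
  shows "Phi x ` (carrier B \<rightarrow>\<^sub>E carrier A) = carrier B \<rightarrow>\<^sub>E carrier A"
proof (rule card_subset_eq)
  show "finite (carrier B \<rightarrow>\<^sub>E carrier A)" using finA finB by (simp add: finite_PiE)
  show "Phi x ` (carrier B \<rightarrow>\<^sub>E carrier A) \<subseteq> carrier B \<rightarrow>\<^sub>E carrier A" using Phi_mem[OF _ x] by blast
  show "card (Phi x ` (carrier B \<rightarrow>\<^sub>E carrier A)) = card (carrier B \<rightarrow>\<^sub>E carrier A)"
    using Phi_inj[OF x] by (rule card_image)
qed

lemma count_R:
  assumes x: "x \<in> carrier B"
  shows "card {f \<in> carrier B \<rightarrow>\<^sub>E carrier A. \<forall>c\<in>R x. cyc A B f x (B.ord x) c [^]\<^bsub>A\<^esub> (q::nat) = \<one>\<^bsub>A\<^esub>}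
     = pow_one_count A q ^ card (R x) * card (carrier A) ^ (card (carrier B) - card (R x))"
proof -
  let ?S = "{f \<in> carrier B \<rightarrow>\<^sub>E carrier A. \<forall>c\<in>R x. cyc A B f x (B.ord x) c [^]\<^bsub>A\<^esub> q = \<one>\<^bsub>A\<^esub>}"
  let ?T = "{g \<in> carrier A. g [^]\<^bsub>A\<^esub> q = \<one>\<^bsub>A\<^esub>}"
  let ?Tgt = "\<Pi>\<^sub>E y\<in>carrier B. (if y \<in> R x then ?T else carrier A)"
  have RB: "R x \<subseteq> carrier B" by (rule R_sub[OF x])
  have PhiR: "\<And>f c. c \<in> R x \<Longrightarrow> Phi x f c = cyc A B f x (B.ord x) c"
    unfolding Phi_def using RB by auto
  have img: "Phi x ` ?S = ?Tgt"
  proof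
    show "Phi x ` ?S \<subseteq> ?Tgt"
    proof
      fix h assume "h \<in> Phi x ` ?S"
      then obtain f where f: "f \<in> ?S" and h: "h = Phi x f" by blast
      have fP: "f \<in> carrier B \<rightarrow>\<^sub>E carrier A" using f by simp
      show "h \<in> ?Tgt" unfolding h Phi_def restrict_PiE_iff
        using f cyc_closed[OF fP x] PiE_mem[OF fP] by auto
    qed
  next
    show "?Tgt \<subseteq> Phi x ` ?S"
    proof
      fix g assume g: "g \<in> ?Tgt"
      have "g \<in> carrier B \<rightarrow>\<^sub>E carrier A"
        using g by (auto simp: PiE_iff split: if_splits)
      then obtain f where f: "f \<in> carrier B \<rightarrow>\<^sub>E carrier A" and gf: "g = Phi x f"
        using Phi_surj[OF x] by blast
      have "\<forall>c\<in>R x. cyc A B f x (B.ord x) c [^]\<^bsub>A\<^esub> q = \<one>\<^bsub>A\<^esub>"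
      proof
        fix c assume c: "c \<in> R x"
        have cB: "c \<in> carrier B" using RB c by (rule subsetD)
        have "g c \<in> (if c \<in> R x then ?T else carrier A)" using g cB by (rule PiE_mem)
        then have "g c \<in> ?T" using c by simp
        then show "cyc A B f x (B.ord x) c [^]\<^bsub>A\<^esub> q = \<one>\<^bsub>A\<^esub>" using PhiR[OF c] gf by simp
      qed
      then show "g \<in> Phi x ` ?S" using f gf by blast
    qed
  qed
  have "inj_on (Phi x) ?S" using Phi_inj[OF x] by (rule inj_on_subset) blast
  then have "card ?S = card ?Tgt" using img card_image by fastforce
  also have "\<dots> = (\<Prod>y\<in>carrier B. card (if y \<in> R x then ?T else carrier A))"
    using finB by (rule card_PiE)
  also have "\<dots> = (\<Prod>y\<in>carrier B. if y \<in> R x then card ?T else card (carrier A))"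
    by (rule prod.cong) auto
  also have "\<dots> = (\<Prod>y\<in>carrier B \<inter> {y. y \<in> R x}. card ?T) * (\<Prod>y\<in>carrier B \<inter> - {y. y \<in> R x}. card (carrier A))"
    using finB by (rule prod.If_cases)
  also have "carrier B \<inter> {y. y \<in> R x} = R x" using RB by blast
  also have "carrier B \<inter> - {y. y \<in> R x} = carrier B - R x" by blast
  also have "(\<Prod>y\<in>carrier B - R x. card (carrier A)) = card (carrier A) ^ (card (carrier B) - card (R x))"
    using RB finB by (simp add: card_Diff_subset finite_subset)
  finally show ?thesis unfolding pow_one_count_def by simp
qed

end

lemma pow_dvd_pow_iff:
  fixes p :: nat assumes p: "Factorial_Ring.prime p"
  shows "p ^ k dvd p ^ m \<longleftrightarrow> k \<le> m"
proof -
  have p1: "1 < p" using p prime_gt_1_nat by blast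
  show ?thesis using divides_primepow_nat[OF p, of "p ^ k" m] power_inject_exp[OF p1] by auto
qed

lemma geom_ind:
  fixes p :: nat
  assumes "k \<le> d"
  shows "real p ^ k = real p ^ d - (real p - 1) * (\<Sum>m<d. if k \<le> m then real p ^ m else 0)"
  using assms
proof (induction d rule: dec_induct)
  case base then show ?case by simp
next
  case (step n)
  then show ?case by (simp add: algebra_simps)
qed

locale wrp = wrf +
  fixes p a b d :: nat
  assumes p: "Factorial_Ring.prime p" and oA: "order A = p ^ a" and oB: "order B = p ^ b"
    and dmax: "p ^ d = Max (A.ord ` carrier A)"
begin

lemma p1: "1 < p" using p prime_gt_1_nat by blast

lemma A_exp: "y \<in> carrier A \<Longrightarrow> y [^]\<^bsub>A\<^esub> (p ^ d) = \<one>\<^bsub>A\<^esub>"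
proof -
  assume y: "y \<in> carrier A"
  have "A.ord y dvd p ^ a" using A.ord_dvd_group_order[OF y] oA by simp
  then obtain i where i: "A.ord y = p ^ i" using divides_primepow_nat[OF p] by blast
  have "A.ord y \<le> p ^ d" unfolding dmax using finA y by (intro Max_ge) auto
  then have "i \<le> d" using i power_le_imp_le_exp[OF p1] by simp
  then have "A.ord y dvd p ^ d" using i pow_dvd_pow_iff[OF p] by simp
  then show ?thesis using A.pow_eq_id[OF y] by simp
qed

lemma order_W: "order W = p ^ (a * p ^ b + b)"
proof -
  have "order W = card (carrier B \<rightarrow>\<^sub>E carrier A) * card (carrier B)"
    unfolding order_def wreath_carrier by (simp add: card_cartesian_product)
  also have "card (carrier B \<rightarrow>\<^sub>E carrier A) = card (carrier A) ^ card (carrier B)"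
    using finB by (simp add: card_PiE)
  finally show ?thesis using oA oB unfolding order_def by (simp add: power_mult power_add)
qed

lemma ord_W:
  assumes f: "f \<in> carrier B \<rightarrow>\<^sub>E carrier A" and x: "x \<in> carrier B"
  shows "\<exists>k'. group.ord W (f, x) = B.ord x * p ^ k' \<and> k' \<le> d \<and>
     (\<forall>m. k' \<le> m \<longleftrightarrow> (\<forall>c\<in>carrier B. cyc A B f x (B.ord x) c [^]\<^bsub>A\<^esub> (p ^ m) = \<one>\<^bsub>A\<^esub>))"
proof -
  interpret W: group W by (rule W_group)
  have fx: "(f, x) \<in> carrier W" using f x by (simp add: wreath_carrier)
  let ?r = "B.ord x"
  have "W.ord (f, x) dvd p ^ (a * p ^ b + b)" using W.ord_dvd_group_order[OF fx] order_W by simp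
  then obtain k where k: "W.ord (f, x) = p ^ k" using divides_primepow_nat[OF p] by blast
  have "(f, x) [^]\<^bsub>W\<^esub> (p ^ k) = \<one>\<^bsub>W\<^esub>" using W.pow_ord_eq_1[OF fx] k by simp
  then have "x [^]\<^bsub>B\<^esub> (p ^ k) = \<one>\<^bsub>B\<^esub>" using W_pow[OF f x] by (simp add: wreath_one)
  then have "?r dvd p ^ k" using B.pow_eq_id[OF x] by simp
  then obtain q where q: "p ^ k = ?r * q" by blast
  then have "q dvd p ^ k" by simp
  then obtain k' where k': "q = p ^ k'" using divides_primepow_nat[OF p] by blast
  have rpos: "0 < ?r" using ord_pos[OF x] .
  have xr: "x [^]\<^bsub>B\<^esub> ?r = \<one>\<^bsub>B\<^esub>" using x by simp
  have iff: "k' \<le> m \<longleftrightarrow> (\<forall>c\<in>carrier B. cyc A B f x ?r c [^]\<^bsub>A\<^esub> (p ^ m) = \<one>\<^bsub>A\<^esub>)" for m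
  proof -
    have "(\<forall>c\<in>carrier B. cyc A B f x ?r c [^]\<^bsub>A\<^esub> (p ^ m) = \<one>\<^bsub>A\<^esub>) \<longleftrightarrow> (f, x) [^]\<^bsub>W\<^esub> (?r * p ^ m) = \<one>\<^bsub>W\<^esub>"
      using W_pow_mult_one[OF f x xr] by simp
    also have "\<dots> \<longleftrightarrow> W.ord (f, x) dvd ?r * p ^ m" using W.pow_eq_id[OF fx] by simp
    also have "\<dots> \<longleftrightarrow> p ^ k' dvd p ^ m" using k q k' rpos by simp
    also have "\<dots> \<longleftrightarrow> k' \<le> m" by (rule pow_dvd_pow_iff[OF p])
    finally show ?thesis by simp
  qed
  have "\<forall>c\<in>carrier B. cyc A B f x ?r c [^]\<^bsub>A\<^esub> (p ^ d) = \<one>\<^bsub>A\<^esub>"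
    using A_exp cyc_closed[OF f x] by blast
  then have "k' \<le> d" using iff by blast
  moreover have "W.ord (f, x) = ?r * p ^ k'" using k q k' by simp
  ultimately show ?thesis using iff by blast
qed

end

context wrp
begin

definition ind where
  "ind x f m = (if (\<forall>c\<in>R x. cyc A B f x (B.ord x) c [^]\<^bsub>A\<^esub> ((p::nat) ^ m) = \<one>\<^bsub>A\<^esub>) then (1::real) else 0)"

lemma per_elem:
  assumes f: "f \<in> carrier B \<rightarrow>\<^sub>E carrier A" and x: "x \<in> carrier B"
  shows "real (group.ord W (f, x)) = real (B.ord x) * real p ^ d
           - (real p - 1) * real (B.ord x) * (\<Sum>m<d. real p ^ m * ind x f m)"
proof -
  obtain k' where k': "group.ord W (f, x) = B.ord x * p ^ k'" "k' \<le> d"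
    and iff: "\<And>m. k' \<le> m \<longleftrightarrow> (\<forall>c\<in>carrier B. cyc A B f x (B.ord x) c [^]\<^bsub>A\<^esub> (p ^ m) = \<one>\<^bsub>A\<^esub>)"
    using ord_W[OF f x] by blast
  have ie: "ind x f m = (if k' \<le> m then 1 else 0)" for m
    unfolding ind_def iff all_B_iff_R[OF f x] ..
  have "(\<Sum>m<d. real p ^ m * ind x f m) = (\<Sum>m<d. if k' \<le> m then real p ^ m else 0)"
    by (rule sum.cong) (auto simp: ie)
  moreover have "real (group.ord W (f, x)) = real (B.ord x) * real p ^ k'" using k'(1) by simp
  moreover note geom_ind[OF k'(2), of p]
  ultimately show ?thesis
    by (metis (no_types, lifting) mult.assoc mult.left_commute right_diff_distrib)
qed

lemma sum_ind:
  assumes x: "x \<in> carrier B"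
  shows "(\<Sum>f\<in>carrier B \<rightarrow>\<^sub>E carrier A. ind x f m) =
    real (pow_one_count A (p ^ m)) ^ card (R x) * real (card (carrier A)) ^ (card (carrier B) - card (R x))"
proof -
  have fin: "finite (carrier B \<rightarrow>\<^sub>E carrier A)" using finA finB by (simp add: finite_PiE)
  have "(\<Sum>f\<in>carrier B \<rightarrow>\<^sub>E carrier A. ind x f m) =
     real (card {f \<in> carrier B \<rightarrow>\<^sub>E carrier A. \<forall>c\<in>R x. cyc A B f x (B.ord x) c [^]\<^bsub>A\<^esub> (p ^ m) = \<one>\<^bsub>A\<^esub>})"
    unfolding ind_def using fin by (simp add: sum.If_cases Int_def)
  also have "\<dots> = real (pow_one_count A (p ^ m)) ^ card (R x) * real (card (carrier A)) ^ (card (carrier B) - card (R x))"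
    unfolding count_R[OF x] by simp
  finally show ?thesis .
qed

end

lemma aux_div: "(Q::real) \<noteq> 0 \<Longrightarrow> D * (Q * V) / (Q * Pn) = D / Pn * V"
  by simp

definition Xf :: "('a, 'c) monoid_scheme \<Rightarrow> nat \<Rightarrow> nat \<Rightarrow> nat \<Rightarrow> nat \<Rightarrow> real" where
  "Xf A p a d n = (\<Sum>m<d. real p ^ m * (real (pow_one_count A (p ^ m)) / real p ^ a) ^ (p ^ n))"

context wrp
begin

lemma sum_ind2:
  assumes x: "x \<in> carrier B"
  shows "(\<Sum>f\<in>carrier B \<rightarrow>\<^sub>E carrier A. ind x f m) =
    real (card (carrier A)) ^ card (carrier B) * (real (pow_one_count A (p ^ m)) / real (card (carrier A))) ^ card (R x)"
proof -
  have KB: "card (R x) \<le> card (carrier B)" using R_sub[OF x] finB by (rule card_mono[rotated])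
  have A0: "real (card (carrier A)) \<noteq> 0" using finA A.one_closed by (auto simp: card_eq_0_iff)
  have "real (card (carrier A)) ^ card (carrier B) = real (card (carrier A)) ^ card (R x) * real (card (carrier A)) ^ (card (carrier B) - card (R x))"
    using KB by (simp flip: power_add)
  then show ?thesis unfolding sum_ind[OF x] using A0 by (simp add: power_divide field_simps)
qed

lemma sum_f:
  assumes x: "x \<in> carrier B"
  shows "(\<Sum>f\<in>carrier B \<rightarrow>\<^sub>E carrier A. real (group.ord W (f, x))) =
    real (card (carrier A)) ^ card (carrier B) * (real (B.ord x) * (real p ^ d - (real p - 1) *
      (\<Sum>m<d. real p ^ m * (real (pow_one_count A (p ^ m)) / real (card (carrier A))) ^ card (R x))))"
proof -
  let ?P = "carrier B \<rightarrow>\<^sub>E carrier A"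
  let ?N = "real (card (carrier A)) ^ card (carrier B)"
  let ?r = "real (B.ord x)"
  have cP: "real (card ?P) = ?N" using finB by (simp add: card_PiE)
  have "(\<Sum>f\<in>?P. real (group.ord W (f, x))) =
      (\<Sum>f\<in>?P. ?r * real p ^ d - (real p - 1) * ?r * (\<Sum>m<d. real p ^ m * ind x f m))"
    by (rule sum.cong) (auto simp: per_elem x)
  also have "\<dots> = real (card ?P) * (?r * real p ^ d) - (real p - 1) * ?r * (\<Sum>f\<in>?P. \<Sum>m<d. real p ^ m * ind x f m)"
    by (simp add: sum_subtractf sum_distrib_left)
  also have "(\<Sum>f\<in>?P. \<Sum>m<d. real p ^ m * ind x f m) = (\<Sum>m<d. real p ^ m * (\<Sum>f\<in>?P. ind x f m))"
    by (simp add: sum.swap[of _ ?P] sum_distrib_left)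
  also have "\<dots> = (\<Sum>m<d. real p ^ m * (?N * (real (pow_one_count A (p ^ m)) / real (card (carrier A))) ^ card (R x)))"
    by (simp add: sum_ind2 x)
  also have "\<dots> = ?N * (\<Sum>m<d. real p ^ m * (real (pow_one_count A (p ^ m)) / real (card (carrier A))) ^ card (R x))"
    by (simp add: sum_distrib_left mult.left_commute)
  finally show ?thesis unfolding cP by (simp add: algebra_simps)
qed


lemma B_ord_pow: "x \<in> carrier B \<Longrightarrow> \<exists>j\<le>b. B.ord x = p ^ j"
  using B.ord_dvd_group_order[of x] oB divides_primepow_nat[OF p] by simp

lemma group_sum:
  fixes g :: "nat \<Rightarrow> real"
  shows "(\<Sum>x\<in>carrier B. g (B.ord x)) = (\<Sum>n=0..b. real (order_count B (p ^ (b - n))) * g (p ^ (b - n)))"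
proof -
  have pt: "g (B.ord x) = (\<Sum>n=0..b. if B.ord x = p ^ (b - n) then g (p ^ (b - n)) else 0)" if x: "x \<in> carrier B" for x
  proof -
    obtain j where j: "j \<le> b" "B.ord x = p ^ j" using B_ord_pow[OF x] by blast
    have "(\<Sum>n=0..b. if B.ord x = p ^ (b - n) then g (p ^ (b - n)) else 0) =
          (\<Sum>n=0..b. if n = b - j then g (p ^ (b - n)) else 0)"
    proof (rule sum.cong)
      fix n assume "n \<in> {0..b}"
      then have "n \<le> b" by simp
      then have "(B.ord x = p ^ (b - n)) = (n = b - j)" using j power_inject_exp[OF p1] by auto
      then show "(if B.ord x = p ^ (b - n) then g (p ^ (b - n)) else 0) = (if n = b - j then g (p ^ (b - n)) else 0)"
        by simp
    qed simp
    also have "\<dots> = g (p ^ (b - (b - j)))" by (simp add: sum.delta)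
    also have "\<dots> = g (B.ord x)" using j by simp
    finally show ?thesis by simp
  qed
  have "(\<Sum>x\<in>carrier B. g (B.ord x)) = (\<Sum>x\<in>carrier B. \<Sum>n=0..b. if B.ord x = p ^ (b - n) then g (p ^ (b - n)) else 0)"
    by (rule sum.cong) (simp_all add: pt)
  also have "\<dots> = (\<Sum>n=0..b. \<Sum>x\<in>carrier B. if B.ord x = p ^ (b - n) then g (p ^ (b - n)) else 0)"
    by (rule sum.swap)
  also have "\<dots> = (\<Sum>n=0..b. real (order_count B (p ^ (b - n))) * g (p ^ (b - n)))"
  proof (rule sum.cong)
    fix n
    show "(\<Sum>x\<in>carrier B. if B.ord x = p ^ (b - n) then g (p ^ (b - n)) else 0) = real (order_count B (p ^ (b - n))) * g (p ^ (b - n))"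
      unfolding order_count_def using finB by (simp add: sum.If_cases Int_def)
  qed simp
  finally show ?thesis .
qed

lemma card_R_eq: "x \<in> carrier B \<Longrightarrow> card (R x) = p ^ b div B.ord x"
  using R_card[of x] ord_pos[of x] oB by (metis nonzero_mult_div_cancel_right not_gr0)

abbreviation XX where "XX n \<equiv> Xf A p a d n"

lemma avg_W: "avg_order W = (\<Sum>n=0..b. (real (order_count B (p ^ (b - n))) / real p ^ n) * (real p ^ d - (real p - 1) * XX n))"
proof -
  let ?P = "carrier B \<rightarrow>\<^sub>E carrier A"
  let ?N = "real (card (carrier A)) ^ card (carrier B)"
  define h where "h r = real r * (real p ^ d - (real p - 1) *
      (\<Sum>m<d. real p ^ m * (real (pow_one_count A (p ^ m)) / real p ^ a) ^ (p ^ b div r)))" for r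
  have cA: "card (carrier A) = p ^ a" using oA unfolding order_def .
  have cB: "card (carrier B) = p ^ b" using oB unfolding order_def .
  have N0: "?N \<noteq> 0" using cA p1 by simp
  have "(\<Sum>u\<in>carrier W. real (group.ord W u)) = (\<Sum>f\<in>?P. \<Sum>x\<in>carrier B. real (group.ord W (f, x)))"
    unfolding wreath_carrier by (simp add: sum.cartesian_product case_prod_unfold)
  also have "\<dots> = (\<Sum>x\<in>carrier B. \<Sum>f\<in>?P. real (group.ord W (f, x)))" by (rule sum.swap)
  also have "\<dots> = (\<Sum>x\<in>carrier B. ?N * h (B.ord x))"
    by (rule sum.cong) (simp_all add: sum_f card_R_eq h_def cA)
  also have "\<dots> = ?N * (\<Sum>n=0..b. real (order_count B (p ^ (b - n))) * h (p ^ (b - n)))"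
    by (simp add: sum_distrib_left[symmetric] group_sum)
  finally have S: "(\<Sum>u\<in>carrier W. real (group.ord W u)) = ?N * (\<Sum>n=0..b. real (order_count B (p ^ (b - n))) * h (p ^ (b - n)))" .
  have oW: "real (order W) = ?N * real p ^ b"
    unfolding order_def wreath_carrier using finB cB by (simp add: card_cartesian_product card_PiE)
  have hn: "real (order_count B (p ^ (b - n))) * h (p ^ (b - n)) / real p ^ b =
     (real (order_count B (p ^ (b - n))) / real p ^ n) * (real p ^ d - (real p - 1) * XX n)" if n: "n \<le> b" for n
  proof -
    have e: "p ^ b = p ^ (b - n) * p ^ n" using n by (simp flip: power_add)
    then have "p ^ b div p ^ (b - n) = p ^ n" using p1 by simp
    then have hf: "h (p ^ (b - n)) = real p ^ (b - n) * (real p ^ d - (real p - 1) * XX n)"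
      unfolding h_def Xf_def by simp
    have pf: "real p ^ b = real p ^ (b - n) * real p ^ n" using e by (metis of_nat_mult of_nat_power)
    show ?thesis unfolding hf pf by (rule aux_div) (use p1 in simp)
  qed
  have "avg_order W = (\<Sum>n=0..b. real (order_count B (p ^ (b - n))) * h (p ^ (b - n))) / real p ^ b"
    unfolding avg_order_def S oW using N0 cA p1 by simp
  also have "\<dots> = (\<Sum>n=0..b. real (order_count B (p ^ (b - n))) * h (p ^ (b - n)) / real p ^ b)"
    by (simp add: sum_divide_distrib)
  also have "\<dots> = (\<Sum>n=0..b. (real (order_count B (p ^ (b - n))) / real p ^ n) * (real p ^ d - (real p - 1) * XX n))"
    by (rule sum.cong) (simp_all add: hn)
  finally show ?thesis .
qed

lemma avg_B: "avg_order B = (\<Sum>n=0..b. real (order_count B (p ^ (b - n))) / real p ^ n)"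
proof -
  have cB: "card (carrier B) = p ^ b" using oB unfolding order_def .
  have "avg_order B = (\<Sum>x\<in>carrier B. real (B.ord x)) / real p ^ b"
    unfolding avg_order_def using oB by simp
  also have "\<dots> = (\<Sum>n=0..b. real (order_count B (p ^ (b - n))) * real (p ^ (b - n))) / real p ^ b"
    using group_sum[of "\<lambda>r. real r"] by simp
  also have "\<dots> = (\<Sum>n=0..b. real (order_count B (p ^ (b - n))) * real (p ^ (b - n)) / real p ^ b)"
    by (simp add: sum_divide_distrib)
  also have "\<dots> = (\<Sum>n=0..b. real (order_count B (p ^ (b - n))) / real p ^ n)"
  proof (rule sum.cong)
    fix n assume "n \<in> {0..b}"
    then have "real p ^ b = real p ^ (b - n) * real p ^ n" by (simp flip: power_add)
    then show "real (order_count B (p ^ (b - n))) * real (p ^ (b - n)) / real p ^ b = real (order_count B (p ^ (b - n))) / real p ^ n"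
      using p1 by (simp add: field_simps)
  qed simp
  finally show ?thesis .
qed

lemma avg_B_pos: "0 < avg_order B"
proof -
  have "0 < (\<Sum>x\<in>carrier B. real (B.ord x))"
    using finB ord_pos by (intro sum_pos) auto
  then show ?thesis unfolding avg_order_def using oB p1 by simp
qed

end


theorem theorem2:
  fixes A :: "('a, 'c) monoid_scheme" and B :: "('b, 'e) monoid_scheme"
    and p a b d :: nat
  assumes "Factorial_Ring.prime p"
    and "group A" and "group B"
    and "order A = p ^ a" and "order B = p ^ b"
    and "a \<ge> 1" and "b \<ge> 1"
    and "p ^ d = Max (group.ord A ` carrier A)"
  shows "let k = (\<lambda>n::nat. (real (order_count B (p ^ (b - n))) / real p ^ n) / avg_order B) in
     avg_order (wreath A B) =
       real p ^ d * avg_order B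
       - (real p - 1) * avg_order B *
         (\<Sum>n = 0..b. k n * (\<Sum>m = 0..<d. real p ^ m *
             (real (pow_one_count A (p ^ m)) / real p ^ a) ^ (p ^ n)))
     \<and> (\<forall>n\<le>b. k n \<ge> 0) \<and> (\<Sum>n = 0..b. k n) = 1"
proof -
  have p1: "1 < p" using assms(1) prime_gt_1_nat by blast
  have "card (carrier A) \<noteq> 0" using assms(4) p1 unfolding order_def by simp
  then have finA: "finite (carrier A)" by (meson card.infinite)
  have "card (carrier B) \<noteq> 0" using assms(5) p1 unfolding order_def by simp
  then have finB: "finite (carrier B)" by (meson card.infinite)
  interpret wrp A B p a b d
  proof (intro wrp.intro wrf.intro wr.intro wrp_axioms.intro wrf_axioms.intro)
    show "group A" "group B" by fact+
    show "finite (carrier A)" "finite (carrier B)" by fact+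
    show "Factorial_Ring.prime p" "order A = p ^ a" "order B = p ^ b" by fact+
    show "p ^ d = Max (group.ord A ` carrier A)" by fact
  qed
  define E where "E n = real (order_count B (p ^ (b - n))) / real p ^ n" for n
  define aB where "aB = avg_order B"
  have aB0: "aB > 0" unfolding aB_def by (rule avg_B_pos)
  have aBs: "aB = (\<Sum>n=0..b. E n)" unfolding aB_def E_def by (rule avg_B)
  have X: "(\<Sum>m = 0..<d. real p ^ m * (real (pow_one_count A (p ^ m)) / real p ^ a) ^ (p ^ n)) = Xf A p a d n" for n
    unfolding Xf_def by (simp add: atLeast0LessThan)
  have main: "avg_order (wreath A B) = real p ^ d * aB - (real p - 1) * aB * (\<Sum>n = 0..b. (E n / aB) * Xf A p a d n)"
  proof -
    have "avg_order (wreath A B) = (\<Sum>n=0..b. E n * (real p ^ d - (real p - 1) * Xf A p a d n))"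
      unfolding E_def by (rule avg_W)
    also have "\<dots> = (\<Sum>n=0..b. real p ^ d * E n - (real p - 1) * (E n * Xf A p a d n))"
      by (rule sum.cong) (simp_all add: algebra_simps)
    also have "\<dots> = real p ^ d * (\<Sum>n=0..b. E n) - (real p - 1) * (\<Sum>n=0..b. E n * Xf A p a d n)"
      by (simp only: sum_subtractf sum_distrib_left)
    also have "(\<Sum>n=0..b. E n * Xf A p a d n) = aB * (\<Sum>n = 0..b. (E n / aB) * Xf A p a d n)"
      using aB0 by (simp add: sum_distrib_left)
    finally show ?thesis unfolding aBs by (simp add: algebra_simps)
  qed
  have k1: "(\<Sum>n = 0..b. E n / aB) = 1" using aB0 by (simp add: aBs[symmetric] sum_divide_distrib[symmetric])
  have k0: "\<forall>n\<le>b. E n / aB \<ge> 0" using aB0 unfolding E_def by simp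
  show ?thesis unfolding Let_def X using main k1 k0 unfolding E_def aB_def by simp
qed

end
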